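(* Let $\mathcal{A}$ be a category of cubes. The following conditions are equivalent: (1) $\mathcal{A}$ is shell-complete; (2) for any $p,q\geq 2$ and any map of $\mathcal A$-sets $x:\partial\mathcal{A}[p]\to\mathcal{A}[q]$, the set map $x_0:[p]\to[q]$ belongs to $\mathcal{A}$; (3) for any $p,q\geq2$, any map of $\mathcal A$-sets $x:\partial\mathcal{A}[p]\to\mathcal{A}[q]$ factors uniquely as a composite $\partial\mathcal{A}[p]\subset\mathcal{A}[p]\to\mathcal{A}[q]$.
   Context: $[0]=\{()\}$, $[n]=\{0,1\}^n$ ($n\ge1$) with the product order; ${\rm PoSet}$ is posets with strictly increasing maps. Face maps $\delta_i^\alpha:[n-1]\to[n]$ insert $\alpha\in\{0,1\}$ at position $i$; $\square$ is the subcategory of ${\rm PoSet}$ with objects $[n]$ generated by face maps. A map $[m]\to[n]$ is adjacency-preserving if strictly increasing and sends pairs at Hamming distance $1$ to pairs at Hamming distance $1$. A category of cubes is a subcategory $\mathcal A\subset{\rm PoSet}$ with objects $\{[n]:n\ge0\}$, containing $\square$, whose morphisms are adjacency-preserving. An $\mathcal A$-set is a presheaf on $\mathcal A$; $\mathcal A[p]=\mathcal A(-,[p])$; $\partial\mathcal A[p]$ is the subpresheaf of $\mathcal A[p]$ with the same $k$-cubes for $k<p$ and none in dimensions $\ge p$. For a map $x$ of $\mathcal A$-sets from $\partial\mathcal A[p]$ (or $\mathcal A[p]$) to $\mathcal A[q]$, $x_0$ is its component in dimension $0$, viewed via $\mathcal A([0],[n])\cong[n]$ as a set map $[p]\to[q]$.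 $\mathrm{cosk}_1^{\mathcal A}$ is the right adjoint of the truncation $K\mapsto K_{\le1}$ from $\mathcal A$-sets to presheaves on the full subcategory on $[0],[1]$. $\mathcal A$ is shell-complete if for every $p\ge2$ the canonical map $\mathcal A[p]\to\mathrm{cosk}_1^{\mathcal A}(\mathcal A[p]_{\le1})$ (adjoint to the identity) is an isomorphism. *)

theory Defs
  imports "HOL-Library.FuncSet"
begin

text \<open>The poset [n] = {0,1}^n, encoded as boolean lists of length n
  (False = 0, True = 1); [0] = {[]} is the one-point poset.\<close>
definition cube :: "nat \<Rightarrow> bool list set" where
  "cube n = {v. length v = n}"

definition cle :: "bool list \<Rightarrow> bool list \<Rightarrow> bool" where
  "cle x y \<longleftrightarrow> list_all2 (\<le>) x y"

definition clt :: "bool list \<Rightarrow> bool list \<Rightarrow> bool" where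
  "clt x y \<longleftrightarrow> cle x y \<and> x \<noteq> y"

definition hamming :: "bool list \<Rightarrow> bool list \<Rightarrow> nat" where
  "hamming x y = card {i. i < length x \<and> x ! i \<noteq> y ! i}"

definition strictly_increasing :: "nat \<Rightarrow> (bool list \<Rightarrow> bool list) \<Rightarrow> bool" where
  "strictly_increasing m f \<longleftrightarrow>
     (\<forall>x\<in>cube m. \<forall>y\<in>cube m. clt x y \<longrightarrow> clt (f x) (f y))"

definition adjacency_preserving :: "nat \<Rightarrow> (bool list \<Rightarrow> bool list) \<Rightarrow> bool" where
  "adjacency_preserving m f \<longleftrightarrow> strictly_increasing m f \<and>
     (\<forall>x\<in>cube m. \<forall>y\<in>cube m. hamming x y = 1 \<longrightarrow> hamming (f x) (f y) = 1)"

text \<open>Face map delta_i^alpha : [m] -> [m+1], inserting alpha at position i (0-based, i \<le> m).\<close>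
definition face :: "nat \<Rightarrow> bool \<Rightarrow> bool list \<Rightarrow> bool list" where
  "face i \<alpha> v = take i v @ [\<alpha>] @ drop i v"

text \<open>A category of cubes: for each m n, a set A m n of (extensional) set maps [m] -> [n],
  closed under identities and composition (a subcategory of PoSet on the objects [n]),
  containing all face maps (hence the cube category generated by them), and all of whose
  morphisms are adjacency-preserving.\<close>
definition category_of_cubes :: "(nat \<Rightarrow> nat \<Rightarrow> (bool list \<Rightarrow> bool list) set) \<Rightarrow> bool" where
  "category_of_cubes A \<longleftrightarrow>
     (\<forall>m n. \<forall>f\<in>A m n. f \<in> cube m \<rightarrow>\<^sub>E cube n \<and> adjacency_preserving m f) \<and>
     (\<forall>n. restrict id (cube n) \<in> A n n) \<and>
     (\<forall>l m n f g. f \<in> A l m \<longrightarrow> g \<in> A m n \<longrightarrow> compose (cube l) g f \<in> A l n) \<and>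
     (\<forall>m i \<alpha>. i \<le> m \<longrightarrow> restrict (face i \<alpha>) (cube m) \<in> A m (Suc m))"

text \<open>Maps of presheaves from the subpresheaf of the representable A[n] consisting of the
  cubes in the dimensions D to the representable A[q], where naturality is required along all
  morphisms of A between dimensions in D.
  With D = {..<p} and n = p these are the maps  \<partial>A[p] \<rightarrow> A[q];
  with D = UNIV they are the maps A[n] \<rightarrow> A[q];
  with D = {0,1} they are the maps of truncated presheaves A[n]_{\<le>1} \<rightarrow> A[q]_{\<le>1}
  (presheaves on the full subcategory on [0],[1]).
  Components are taken extensional so that equality of maps is equality of terms.\<close>
definition psh_hom ::
  "(nat \<Rightarrow> nat \<Rightarrow> (bool list \<Rightarrow> bool list) set) \<Rightarrow> nat set \<Rightarrow> nat \<Rightarrow> nat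
     \<Rightarrow> (nat \<Rightarrow> (bool list \<Rightarrow> bool list) \<Rightarrow> (bool list \<Rightarrow> bool list)) set" where
  "psh_hom A D n q =
     {t \<in> (\<Pi>\<^sub>E k\<in>D. (A k n \<rightarrow>\<^sub>E A k q)).
        \<forall>j\<in>D. \<forall>k\<in>D. \<forall>f\<in>A k n. \<forall>g\<in>A j k.
          t j (compose (cube j) f g) = compose (cube j) (t k f) g}"

text \<open>cosk_1(A[p]_{\<le>1}) in dimension n is Hom(A[n]_{\<le>1}, A[p]_{\<le>1}); the canonical map
  A[p] \<rightarrow> cosk_1(A[p]_{\<le>1}) (unit of the adjunction) sends f \<in> A(n,p) to postcomposition
  with f on 0- and 1-cubes.\<close>
definition cosk_unit ::
  "(nat \<Rightarrow> nat \<Rightarrow> (bool list \<Rightarrow> bool list) set) \<Rightarrow> nat \<Rightarrow> (bool list \<Rightarrow> bool list)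
     \<Rightarrow> (nat \<Rightarrow> (bool list \<Rightarrow> bool list) \<Rightarrow> (bool list \<Rightarrow> bool list))" where
  "cosk_unit A n f = (\<lambda>k\<in>{0,1}. \<lambda>g\<in>A k n. compose (cube k) f g)"

definition shell_complete :: "(nat \<Rightarrow> nat \<Rightarrow> (bool list \<Rightarrow> bool list) set) \<Rightarrow> bool" where
  "shell_complete A \<longleftrightarrow>
     (\<forall>p\<ge>2. \<forall>n. bij_betw (cosk_unit A n) (A n p) (psh_hom A {0,1} n p))"

text \<open>The dimension-0 component of a map x, viewed via A([0],[n]) = [n] as a set map [p] \<rightarrow> [q]:
  a vertex v corresponds to the map [0] \<rightarrow> [p] with value v.\<close>
definition vertex_map ::
  "nat \<Rightarrow> (nat \<Rightarrow> (bool list \<Rightarrow> bool list) \<Rightarrow> (bool list \<Rightarrow> bool list)) \<Rightarrow> bool list \<Rightarrow> bool list" where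
  "vertex_map p x = (\<lambda>v\<in>cube p. x 0 (\<lambda>u\<in>cube 0. v) [])"

end

theory Submission
  imports Defs
begin

definition cv :: "bool list \<Rightarrow> bool list \<Rightarrow> bool list" where
  "cv v = (\<lambda>u\<in>cube 0. v)"

lemma cube0: "cube 0 = {[]}" by (auto simp: cube_def)

lemma coc_fun: "category_of_cubes A \<Longrightarrow> f \<in> A m n \<Longrightarrow> f \<in> cube m \<rightarrow>\<^sub>E cube n"
  by (auto simp: category_of_cubes_def)
lemma coc_id: "category_of_cubes A \<Longrightarrow> restrict id (cube n) \<in> A n n"
  by (auto simp: category_of_cubes_def)
lemma coc_comp: "category_of_cubes A \<Longrightarrow> f \<in> A l m \<Longrightarrow> g \<in> A m n \<Longrightarrow> compose (cube l) g f \<in> A l n"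
  by (auto simp: category_of_cubes_def)
lemma coc_face: "category_of_cubes A \<Longrightarrow> i \<le> m \<Longrightarrow> restrict (face i a) (cube m) \<in> A m (Suc m)"
  by (auto simp: category_of_cubes_def)

lemma vert: "category_of_cubes A \<Longrightarrow> v \<in> cube n \<Longrightarrow> cv v \<in> A 0 n"
proof (induction n arbitrary: v)
  case 0
  then have "v = []" by (simp add: cube_def)
  moreover have "cv [] = restrict id (cube 0)" by (auto simp: cv_def cube0)
  ultimately show ?case using coc_id[OF 0(1), of 0] by metis
next
  case (Suc n)
  then obtain a w where v: "v = a # w" and w: "w \<in> cube n"
    by (cases v) (auto simp: cube_def)
  have "compose (cube 0) (restrict (face 0 a) (cube n)) (cv w) \<in> A 0 (Suc n)"
    using coc_comp[OF Suc(2) Suc.IH[OF Suc(2) w] coc_face[OF Suc(2) le0[of n], where a=a]] .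
  moreover have "compose (cube 0) (restrict (face 0 a) (cube n)) (cv w) = cv v"
    using w v by (auto simp: compose_def cv_def face_def)
  ultimately show ?case by simp
qed

lemma comp_cv: "compose (cube 0) f (cv v) = cv (f v)"
  by (auto simp: compose_def cv_def)

lemma psh_nat: "t \<in> psh_hom A D n q \<Longrightarrow> j\<in>D \<Longrightarrow> k\<in>D \<Longrightarrow> f\<in>A k n \<Longrightarrow> g\<in>A j k \<Longrightarrow>
   t j (compose (cube j) f g) = compose (cube j) (t k f) g"
  by (auto simp: psh_hom_def)

lemma psh_in: "t \<in> psh_hom A D n q \<Longrightarrow> k\<in>D \<Longrightarrow> f\<in>A k n \<Longrightarrow> t k f \<in> A k q"
  by (auto simp: psh_hom_def)

lemma psh_undef1: "t \<in> psh_hom A D n q \<Longrightarrow> k\<notin>D \<Longrightarrow> t k = undefined"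
  by (auto simp: psh_hom_def)

lemma psh_undef2: "t \<in> psh_hom A D n q \<Longrightarrow> k \<in> D \<Longrightarrow> f\<notin>A k n \<Longrightarrow> t k f = undefined"
  by (auto simp: psh_hom_def)

lemma key_val:
  assumes c: "category_of_cubes A" and t: "t \<in> psh_hom A D n q" and "0\<in>D" "k\<in>D"
    and g: "g\<in>A k n" and u: "u\<in>cube k"
  shows "t k g u = t 0 (cv (g u)) []"
proof -
  have "t 0 (cv (g u)) = t 0 (compose (cube 0) g (cv u))" by (simp add: comp_cv)
  also have "\<dots> = compose (cube 0) (t k g) (cv u)"
    using psh_nat[OF t assms(3,4) g vert[OF c u]] .
  finally show ?thesis by (simp add: compose_def cv_def cube0)
qed

lemma key_fun:
  assumes c: "category_of_cubes A" and t: "t \<in> psh_hom A D n q" and "0\<in>D" "k\<in>D"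
    and g: "g\<in>A k n"
  shows "t k g = (\<lambda>u\<in>cube k. t 0 (cv (g u)) [])"
proof
  fix u
  have "t k g \<in> cube k \<rightarrow>\<^sub>E cube q" using coc_fun[OF c psh_in[OF t assms(4) g]] .
  then show "t k g u = (\<lambda>u\<in>cube k. t 0 (cv (g u)) []) u"
    using key_val[OF assms] by (cases "u \<in> cube k") (auto simp: PiE_def extensional_def)
qed

lemma fun_vert:
  assumes c: "category_of_cubes A" and f: "f \<in> A n p"
  shows "f = (\<lambda>v\<in>cube n. compose (cube 0) f (cv v) [])"
proof
  fix v
  have "f \<in> cube n \<rightarrow>\<^sub>E cube p" using coc_fun[OF c f] .
  then show "f v = (\<lambda>v\<in>cube n. compose (cube 0) f (cv v) []) v"
    by (cases "v \<in> cube n") (auto simp: PiE_def extensional_def compose_def cv_def cube0)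
qed

lemma vertex_map_alt: "vertex_map p x = (\<lambda>v\<in>cube p. x 0 (cv v) [])"
  by (simp add: vertex_map_def cv_def)

lemma yoneda:
  assumes c: "category_of_cubes A" and p: "1 \<le> p" and x: "x \<in> psh_hom A {..<p} p q"
  shows "(\<exists>!y. y \<in> psh_hom A UNIV p q \<and> restrict y {..<p} = x) \<longleftrightarrow> vertex_map p x \<in> A p q"
proof
  assume "\<exists>!y. y \<in> psh_hom A UNIV p q \<and> restrict y {..<p} = x"
  then obtain y where y: "y \<in> psh_hom A UNIV p q" and r: "restrict y {..<p} = x" by blast
  have "restrict y {..<p} 0 = x 0" using r by simp
  then have y0: "y 0 = x 0" using p by simp
  have yin0: "y p (restrict id (cube p)) \<in> A p q" using psh_in[OF y UNIV_I coc_id[OF c]] .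
  have "y p (restrict id (cube p)) = (\<lambda>u\<in>cube p. y 0 (cv (restrict id (cube p) u)) [])"
    by (rule key_fun[OF c y UNIV_I UNIV_I coc_id[OF c]])
  moreover have "(\<lambda>u\<in>cube p. y 0 (cv (restrict id (cube p) u)) []) = vertex_map p x"
    unfolding vertex_map_alt y0 by (intro restrict_ext) simp
  ultimately have "y p (restrict id (cube p)) = vertex_map p x"
    by simp
  then show "vertex_map p x \<in> A p q" using yin0 by metis
next
  assume f: "vertex_map p x \<in> A p q"
  define f where "f = vertex_map p x"
  define y where "y = (\<lambda>k. \<lambda>g\<in>A k p. compose (cube k) f g)"
  have yin: "y \<in> psh_hom A UNIV p q"
    unfolding psh_hom_def
  proof (intro CollectI conjI ballI)
    show "y \<in> (\<Pi>\<^sub>E k\<in>UNIV. A k p \<rightarrow>\<^sub>E A k q)"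
      using coc_comp[OF c _ f] by (auto simp: y_def f_def)
  next
    fix j k g h assume j: "j \<in> (UNIV::nat set)" and k: "k \<in> (UNIV::nat set)"
      and g: "g \<in> A k p" and h: "h \<in> A j k"
    have hf: "h \<in> cube j \<rightarrow> cube k" using coc_fun[OF c h] by auto
    show "y j (compose (cube j) g h) = compose (cube j) (y k g) h"
      using coc_comp[OF c h g] g compose_assoc[OF hf, of f g] by (simp add: y_def)
  qed
  have ry: "restrict y {..<p} = x"
  proof
    fix k
    show "restrict y {..<p} k = x k"
    proof (cases "k < p")
      case False then show ?thesis using psh_undef1[OF x] by simp
    next
      case True
      show ?thesis
      proof
        fix g
        show "restrict y {..<p} k g = x k g"
        proof (cases "g \<in> A k p")
          case False then show ?thesis using psh_undef2[OF x _ False] True by (simp add: y_def)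
        next
          case g: True
          have gf: "g \<in> cube k \<rightarrow>\<^sub>E cube p" using coc_fun[OF c g] .
          have "x k g = (\<lambda>u\<in>cube k. x 0 (cv (g u)) [])"
            using key_fun[OF c x _ _ g] p True by simp
          moreover have "compose (cube k) f g = (\<lambda>u\<in>cube k. x 0 (cv (g u)) [])"
            using gf by (auto simp: compose_def f_def vertex_map_alt intro!: restrict_ext)
          ultimately show ?thesis using True g by (simp add: y_def)
        qed
      qed
    qed
  qed
  have uniq: "y' = y" if y': "y' \<in> psh_hom A UNIV p q" and r': "restrict y' {..<p} = x" for y'
  proof
    fix k
    have "restrict y' {..<p} 0 = x 0" using r' by simp
    then have y'0: "y' 0 = x 0" using p by simp
    have "restrict y {..<p} 0 = x 0" using ry by simp
    then have y0: "y 0 = x 0" using p by simp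
    show "y' k = y k"
    proof
      fix g
      show "y' k g = y k g"
      proof (cases "g \<in> A k p")
        case False then show ?thesis using psh_undef2[OF y' _ False] psh_undef2[OF yin _ False] by simp
      next
        case True
        show ?thesis using key_fun[OF c y' _ _ True] key_fun[OF c yin _ _ True] y'0 y0 by simp
      qed
    qed
  qed
  show "\<exists>!y. y \<in> psh_hom A UNIV p q \<and> restrict y {..<p} = x"
    using yin ry uniq by blast
qed

lemma cosk_in:
  assumes c: "category_of_cubes A" and f: "f \<in> A n p"
  shows "cosk_unit A n f \<in> psh_hom A {0,1} n p"
  unfolding psh_hom_def
proof (intro CollectI conjI ballI)
  show "cosk_unit A n f \<in> (\<Pi>\<^sub>E k\<in>{0,1}. A k n \<rightarrow>\<^sub>E A k p)"
    using coc_comp[OF c _ f] by (auto simp: cosk_unit_def)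
next
  fix j k g h assume j: "j \<in> {0::nat,1}" and k: "k \<in> {0::nat,1}"
    and g: "g \<in> A k n" and h: "h \<in> A j k"
  have hf: "h \<in> cube j \<rightarrow> cube k" using coc_fun[OF c h] by auto
  show "cosk_unit A n f j (compose (cube j) g h) = compose (cube j) (cosk_unit A n f k g) h"
    using coc_comp[OF c h g] g j k compose_assoc[OF hf, of f g] by (simp add: cosk_unit_def)
qed

lemma cosk_inj:
  assumes c: "category_of_cubes A"
  shows "inj_on (cosk_unit A n) (A n p)"
proof
  fix f g assume f: "f \<in> A n p" and g: "g \<in> A n p" and e: "cosk_unit A n f = cosk_unit A n g"
  have "\<forall>v\<in>cube n. compose (cube 0) f (cv v) = compose (cube 0) g (cv v)"
  proof
    fix v assume v: "v \<in> cube n"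
    have "cosk_unit A n f 0 (cv v) = cosk_unit A n g 0 (cv v)" using e by simp
    then show "compose (cube 0) f (cv v) = compose (cube 0) g (cv v)"
      using vert[OF c v] by (simp add: cosk_unit_def)
  qed
  then show "f = g" using fun_vert[OF c f] fun_vert[OF c g]
    by (metis (no_types, lifting) restrict_ext)
qed

lemma lemL:
  assumes c: "category_of_cubes A" and t: "t \<in> psh_hom A {0,1} n p" and f: "f \<in> A n p"
    and fv: "\<forall>v\<in>cube n. f v = t 0 (cv v) []"
  shows "cosk_unit A n f = t"
proof
  fix k
  show "cosk_unit A n f k = t k"
  proof (cases "k \<in> {0,1}")
    case False then show ?thesis using psh_undef1[OF t False] by (simp add: cosk_unit_def)
  next
    case k: True
    show ?thesis
    proof
      fix g
      show "cosk_unit A n f k g = t k g"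
      proof (cases "g \<in> A k n")
        case False then show ?thesis using psh_undef2[OF t k False] k by (simp add: cosk_unit_def)
      next
        case g: True
        have gf: "g \<in> cube k \<rightarrow>\<^sub>E cube n" using coc_fun[OF c g] .
        have "compose (cube k) f g = (\<lambda>u\<in>cube k. t 0 (cv (g u)) [])"
          using gf fv by (auto simp: compose_def intro!: restrict_ext)
        then show ?thesis using key_fun[OF c t _ k g] k g by (simp add: cosk_unit_def)
      qed
    qed
  qed
qed

lemma main_ind:
  assumes c: "category_of_cubes A"
    and H: "\<forall>p q. 2 \<le> p \<longrightarrow> 2 \<le> q \<longrightarrow> (\<forall>x\<in>psh_hom A {..<p} p q. vertex_map p x \<in> A p q)"
    and p: "2 \<le> p"
  shows "\<forall>t\<in>psh_hom A {0,1} n p. \<exists>f\<in>A n p. \<forall>v\<in>cube n. f v = t 0 (cv v) []"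
proof (induction n rule: less_induct)
  case (less n)
  show ?case
  proof
    fix t assume t: "t \<in> psh_hom A {0,1} n p"
    consider "n = 0" | "n = 1" | "2 \<le> n" by linarith
    then show "\<exists>f\<in>A n p. \<forall>v\<in>cube n. f v = t 0 (cv v) []"
    proof cases
      case 1
      have e: "cv [] = restrict id (cube 0)" by (auto simp: cv_def cube0)
      have z: "(0::nat) \<in> {0,1}" by simp
      have "t 0 (restrict id (cube 0)) \<in> A 0 p" using psh_in[OF t z] coc_id[OF c, of 0] 1 by metis
      then have "t 0 (cv []) \<in> A 0 p" unfolding e .
      then show ?thesis using 1 by (auto simp: cube0)
    next
      case 2
      have z: "(1::nat) \<in> {0,1}" by simp
      have t1: "t \<in> psh_hom A {0,1} 1 p" using t 2 by simp
      have "t 1 (restrict id (cube 1)) \<in> A 1 p" using psh_in[OF t1 z coc_id[OF c]] .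
      moreover have "\<forall>v\<in>cube 1. t 1 (restrict id (cube 1)) v = t 0 (cv v) []"
      proof
        fix v assume v: "v \<in> cube 1"
        have z0: "(0::nat) \<in> {0,1}" by simp
        have e: "restrict id (cube 1) v = v" using v by simp
        show "t 1 (restrict id (cube 1)) v = t 0 (cv v) []"
          using key_val[OF c t1 z0 z coc_id[OF c] v] unfolding e .
      qed
      ultimately show ?thesis using 2 by blast
    next
      case 3
      define \<phi> where "\<phi> v = t 0 (cv v) []" for v
      define x where "x = (\<lambda>k\<in>{..<n}. \<lambda>g\<in>A k n. \<lambda>u\<in>cube k. \<phi> (g u))"
      have xin: "(\<lambda>u\<in>cube k. \<phi> (g u)) \<in> A k p" if k: "k < n" and g: "g \<in> A k n" for k g
      proof -
        define t' where "t' = (\<lambda>j\<in>{0::nat,1}. \<lambda>h\<in>A j k. t j (compose (cube j) g h))"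
        have t': "t' \<in> psh_hom A {0,1} k p"
          unfolding psh_hom_def
        proof (intro CollectI conjI ballI)
          show "t' \<in> (\<Pi>\<^sub>E j\<in>{0,1}. A j k \<rightarrow>\<^sub>E A j p)"
            using psh_in[OF t _ coc_comp[OF c _ g]] by (auto simp: t'_def)
        next
          fix j l h h' assume j: "j \<in> {0::nat,1}" and l: "l \<in> {0::nat,1}"
            and h: "h \<in> A l k" and h': "h' \<in> A j l"
          have hf: "h' \<in> cube j \<rightarrow> cube l" using coc_fun[OF c h'] by auto
          have hf2: "h \<in> cube l \<rightarrow> cube k" using coc_fun[OF c h] by auto
          have "compose (cube j) g (compose (cube j) h h') = compose (cube j) (compose (cube l) g h) h'"
            using compose_assoc[OF hf, of g h] .
          then show "t' j (compose (cube j) h h') = compose (cube j) (t' l h) h'"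
            using coc_comp[OF c h' h] h j l psh_nat[OF t j l coc_comp[OF c h g] h']
            by (simp add: t'_def)
        qed
        obtain f' where f': "f' \<in> A k p" and fv: "\<forall>u\<in>cube k. f' u = t' 0 (cv u) []"
          using less.IH[OF k] t' by blast
        have "f' = (\<lambda>u\<in>cube k. \<phi> (g u))"
        proof
          fix u
          have ff: "f' \<in> cube k \<rightarrow>\<^sub>E cube p" using coc_fun[OF c f'] .
          show "f' u = (\<lambda>u\<in>cube k. \<phi> (g u)) u"
          proof (cases "u \<in> cube k")
            case False then show ?thesis using ff by (auto simp: PiE_def extensional_def)
          next
            case True
            then show ?thesis using fv vert[OF c True]
              by (simp add: t'_def comp_cv \<phi>_def)
          qed
        qed
        then show ?thesis using f' by simp
      qed
      have xp: "x \<in> psh_hom A {..<n} n p"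
        unfolding psh_hom_def
      proof (intro CollectI conjI ballI)
        show "x \<in> (\<Pi>\<^sub>E k\<in>{..<n}. A k n \<rightarrow>\<^sub>E A k p)"
          using xin by (auto simp: x_def)
      next
        fix j k g h assume j: "j \<in> {..<n}" and k: "k \<in> {..<n}" and g: "g \<in> A k n" and h: "h \<in> A j k"
        have hf: "h \<in> cube j \<rightarrow> cube k" using coc_fun[OF c h] by auto
        show "x j (compose (cube j) g h) = compose (cube j) (x k g) h"
          using coc_comp[OF c h g] g j k hf
          by (auto simp: x_def compose_def intro!: restrict_ext)
      qed
      have vm: "vertex_map n x = (\<lambda>v\<in>cube n. \<phi> v)"
        unfolding vertex_map_alt using 3 vert[OF c]
        by (auto simp: x_def cv_def cube0 intro!: restrict_ext)
      have "vertex_map n x \<in> A n p" using H 3 p xp by blast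
      then show ?thesis using vm \<phi>_def by (intro bexI[of _ "vertex_map n x"]) auto
    qed
  qed
qed

lemma one_two:
  assumes c: "category_of_cubes A"
  shows "shell_complete A \<longleftrightarrow>
            (\<forall>p q. 2 \<le> p \<longrightarrow> 2 \<le> q \<longrightarrow>
               (\<forall>x\<in>psh_hom A {..<p} p q. vertex_map p x \<in> A p q))"
proof
  assume S: "shell_complete A"
  show "\<forall>p q. 2 \<le> p \<longrightarrow> 2 \<le> q \<longrightarrow> (\<forall>x\<in>psh_hom A {..<p} p q. vertex_map p x \<in> A p q)"
  proof (intro allI impI ballI)
    fix p q x assume p: "2 \<le> (p::nat)" and q: "2 \<le> (q::nat)" and x: "x \<in> psh_hom A {..<p} p q"
    define t where "t = restrict x {0,1}"
    have t: "t \<in> psh_hom A {0,1} p q"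
      using x p unfolding psh_hom_def t_def by (auto simp: PiE_def Pi_def extensional_def)
    have "bij_betw (cosk_unit A p) (A p q) (psh_hom A {0,1} p q)" using S q
      unfolding shell_complete_def by blast
    then obtain f where f: "f \<in> A p q" and ft: "cosk_unit A p f = t"
      using t by (metis bij_betw_def imageE)
    have "f = vertex_map p x"
      unfolding vertex_map_alt
    proof (subst fun_vert[OF c f], intro restrict_ext)
      fix v assume v: "v \<in> cube p"
      have "cosk_unit A p f 0 (cv v) [] = t 0 (cv v) []" using ft by simp
      then show "compose (cube 0) f (cv v) [] = x 0 (cv v) []"
        using vert[OF c v] by (simp add: cosk_unit_def t_def)
    qed
    then show "vertex_map p x \<in> A p q" using f by simp
  qed
next
  assume H: "\<forall>p q. 2 \<le> p \<longrightarrow> 2 \<le> q \<longrightarrow> (\<forall>x\<in>psh_hom A {..<p} p q. vertex_map p x \<in> A p q)"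
  show "shell_complete A"
    unfolding shell_complete_def
  proof (intro allI impI)
    fix p n assume p: "2 \<le> (p::nat)"
    show "bij_betw (cosk_unit A n) (A n p) (psh_hom A {0,1} n p)"
      unfolding bij_betw_def
    proof (intro conjI cosk_inj[OF c] equalityI subsetI)
      fix t assume "t \<in> cosk_unit A n ` A n p"
      then show "t \<in> psh_hom A {0,1} n p" using cosk_in[OF c] by blast
    next
      fix t assume t: "t \<in> psh_hom A {0,1} n p"
      obtain f where f: "f \<in> A n p" and fv: "\<forall>v\<in>cube n. f v = t 0 (cv v) []"
        using main_ind[OF c H p] t by blast
      show "t \<in> cosk_unit A n ` A n p" using lemL[OF c t f fv] f by (metis image_eqI)
    qed
  qed
qed

theorem theorem7p4:
  assumes "category_of_cubes A"
  shows "(shell_complete A \<longleftrightarrow>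
            (\<forall>p q. 2 \<le> p \<longrightarrow> 2 \<le> q \<longrightarrow>
               (\<forall>x\<in>psh_hom A {..<p} p q. vertex_map p x \<in> A p q)))
       \<and> (shell_complete A \<longleftrightarrow>
            (\<forall>p q. 2 \<le> p \<longrightarrow> 2 \<le> q \<longrightarrow>
               (\<forall>x\<in>psh_hom A {..<p} p q.
                  \<exists>!y. y \<in> psh_hom A UNIV p q \<and> restrict y {..<p} = x)))"
proof -
  have "(\<forall>p q. 2 \<le> p \<longrightarrow> 2 \<le> q \<longrightarrow>
               (\<forall>x\<in>psh_hom A {..<p} p q. vertex_map p x \<in> A p q)) \<longleftrightarrow>
        (\<forall>p q. 2 \<le> p \<longrightarrow> 2 \<le> q \<longrightarrow>
               (\<forall>x\<in>psh_hom A {..<p} p q.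
                  \<exists>!y. y \<in> psh_hom A UNIV p q \<and> restrict y {..<p} = x))"
    using yoneda[OF assms] by (meson le_trans one_le_numeral)
  then show ?thesis using one_two[OF assms] by simp
qed

end
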